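(* Let $m\ge2$, let $C_1,\dots,C_m$ be real full-row-rank matrices with $n$ columns, $P_i=C_i'(C_iC_i')^{-1}C_i$, and let $M$ be the $mn\times mn$ matrix of the map $(x_1,\dots,x_m)\mapsto\big(x_i-\tfrac12P_i(x_i-x_{i-1})\big)_{i=1}^m$ with $x_0:=x_m$. Suppose that for all $x_1,\dots,x_m\in\mathbb R^n$, $C_ix_i=C_ix_{i-1}$ for all $i$ implies $x_1=\cdots=x_m$ (well-configuredness of the directed cycle $1\to\cdots\to m\to1$). Then the eigenvalue $1$ of $M$ has algebraic multiplicity exactly $n$ (equal to its geometric multiplicity).
   Context: $'$ denotes transpose; $P_i$ is the orthogonal projection onto $(\ker C_i)^\perp$. *)

theory Defs
  imports "Jordan_Normal_Form.Jordan_Normal_Form_Uniqueness" "Jordan_Normal_Form.DL_Rank"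
begin

(* Two-sided inverse of a square matrix (well defined when it exists). *)
definition inv_mat :: "real mat \<Rightarrow> real mat" where
  "inv_mat A = (SOME B. B \<in> carrier_mat (dim_row A) (dim_row A) \<and>
                        A * B = 1\<^sub>m (dim_row A) \<and> B * A = 1\<^sub>m (dim_row A))"

definition proj_mat :: "real mat \<Rightarrow> real mat" where
  "proj_mat C = transpose_mat C * inv_mat (C * transpose_mat C) * C"

definition full_row_rank :: "real mat \<Rightarrow> bool" where
  "full_row_rank C \<longleftrightarrow> vec_space.rank (dim_row C) C = dim_row C"

(* blocks are indexed 0..<m; block i of a vector of length m*n *)
definition blk :: "nat \<Rightarrow> real vec \<Rightarrow> nat \<Rightarrow> real vec" where
  "blk n x i = vec n (\<lambda>p. x $ (i * n + p))"

definition pred_cyc :: "nat \<Rightarrow> nat \<Rightarrow> nat" where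
  "pred_cyc m i = (i + m - 1) mod m"

(* the linear map (x_i)_i |-> (x_i - 1/2 P_i (x_i - x_{i-1}))_i on R^{mn} *)
definition cyc_map :: "nat \<Rightarrow> nat \<Rightarrow> (nat \<Rightarrow> real mat) \<Rightarrow> real vec \<Rightarrow> real vec" where
  "cyc_map m n C x = vec (m * n) (\<lambda>a.
      x $ a - (1/2) * ((proj_mat (C (a div n)) *\<^sub>v
                 (blk n x (a div n) - blk n x (pred_cyc m (a div n)))) $ (a mod n)))"

definition cyc_matrix :: "nat \<Rightarrow> nat \<Rightarrow> (nat \<Rightarrow> real mat) \<Rightarrow> real mat" where
  "cyc_matrix m n C = mat (m * n) (m * n) (\<lambda>(a, b). cyc_map m n C (unit_vec (m * n) b) $ a)"

definition alg_mult :: "real mat \<Rightarrow> real \<Rightarrow> nat" where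
  "alg_mult A ev = Polynomial.order ev (char_poly A)"

definition geom_mult :: "real mat \<Rightarrow> real \<Rightarrow> nat" where
  "geom_mult A ev = kernel_dim (char_matrix A ev)"

end

theory Submission
  imports Defs "Jordan_Normal_Form.Jordan_Normal_Form_Existence"
begin


lemma order_of_real_poly: "Polynomial.order (complex_of_real a) (map_poly of_real p) = Polynomial.order a p"
proof -
  interpret h: map_poly_inj_idom_divide_hom "of_real :: real \<Rightarrow> complex" by unfold_locales auto
  show ?thesis by (rule h.order_hom)
qed

lemma sum_list_min_eq:
  fixes L :: "nat list"
  assumes "sum_list (map (min 1) L) = sum_list (map (min 2) L)"
  shows "\<forall>x\<in>set L. x \<le> 1"
  using assms
proof (induct L)
  case (Cons a L)
  have "min 1 a \<le> min 2 a" by simp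
  moreover have "sum_list (map (min 1) L) \<le> sum_list (map (min 2) L)"
    by (rule sum_list_mono) simp
  ultimately have "min 1 a = min 2 a" "sum_list (map (min 1) L) = sum_list (map (min 2) L)"
    using Cons(2) by auto
  then show ?case using Cons(1) by auto
qed simp

lemma sum_list_min1: "\<forall>x\<in>set (L::nat list). x \<le> 1 \<Longrightarrow> sum_list (map (min 1) L) = sum_list L"
  by (induct L) auto

lemma kernel_dim_cong: "dim_col A = dim_col B \<Longrightarrow> mat_kernel A = mat_kernel B \<Longrightarrow> kernel_dim A = kernel_dim B"
  unfolding kernel_dim_def by simp

lemma jnf_order_kernel:
  fixes A :: "complex mat"
  assumes A: "A \<in> carrier_mat N N"
    and ker: "mat_kernel (char_matrix A e ^\<^sub>m 2) = mat_kernel (char_matrix A e)"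
  shows "Polynomial.order e (char_poly A) = kernel_dim (char_matrix A e)"
proof -
  obtain as where "char_poly A = (\<Prod> a \<leftarrow> as. [:- a, 1:])"
    using char_poly_factorized[OF A] by blast
  from jordan_nf_exists[OF A this] obtain n_as where jnf: "jordan_nf A n_as" by blast
  let ?L = "map fst [(n, e')\<leftarrow>n_as . e' = e]"
  have cm: "char_matrix A e \<in> carrier_mat N N" using A by simp
  have p1: "char_matrix A e ^\<^sub>m 1 = char_matrix A e" using cm by simp
  have d1: "dim_gen_eigenspace A e 1 = kernel_dim (char_matrix A e)"
    unfolding dim_gen_eigenspace_def p1 ..
  have d2: "dim_gen_eigenspace A e 2 = kernel_dim (char_matrix A e)"
    unfolding dim_gen_eigenspace_def
    by (rule kernel_dim_cong[OF _ ker], insert cm, simp)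
  have s1: "dim_gen_eigenspace A e 1 = sum_list (map (min 1) ?L)"
    using dim_gen_eigenspace[OF jnf, of e 1] by simp
  have s2: "dim_gen_eigenspace A e 2 = sum_list (map (min 2) ?L)"
    using dim_gen_eigenspace[OF jnf, of e 2] by simp
  have le: "\<forall>x\<in>set ?L. x \<le> 1"
    by (rule sum_list_min_eq, insert s1 s2 d1 d2, simp)
  have "Polynomial.order e (char_poly A) = sum_list ?L"
    unfolding jordan_nf_order[OF jnf] by (simp add: case_prod_beta' cong: filter_cong)
  also have "\<dots> = sum_list (map (min 1) ?L)" using sum_list_min1[OF le] by simp
  finally show ?thesis using s1 d1 by simp
qed



definition cons_set :: "nat \<Rightarrow> nat \<Rightarrow> 'a vec set" where
  "cons_set N n = {x \<in> carrier_vec N. \<forall>a<N. x $ a = x $ (a mod n)}"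

definition Emat :: "nat \<Rightarrow> nat \<Rightarrow> 'a :: field mat" where
  "Emat N n = mat (N - n) N (\<lambda>(i,j). if j = i then 1 else if j = N - n + i mod n then -1 else 0)"

lemma Emat_ref: "row_echelon_form (Emat N n :: 'a :: field mat)"
  unfolding row_echelon_form_def
proof (intro exI[of _ "\<lambda>i. i"] pivot_funI)
  show "dim_row (Emat N n :: 'a mat) = N - n" by (simp add: Emat_def)
qed (auto simp: Emat_def)

lemma Emat_rows: "card {i. i < N - n \<and> row (Emat N n :: 'a :: field mat) i \<noteq> 0\<^sub>v N} = N - n"
proof -
  have "{i. i < N - n \<and> row (Emat N n :: 'a mat) i \<noteq> 0\<^sub>v N} = {..<N-n}"
  proof (safe)
    fix i assume i: "i < N - n" and r: "row (Emat N n :: 'a mat) i = 0\<^sub>v N"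
    have "row (Emat N n :: 'a mat) i $ i = 1" using i by (simp add: Emat_def)
    then show False using r i by simp
  qed
  then show ?thesis by simp
qed

lemma arith1: fixes N m n j :: nat assumes "N = m * n" "m \<ge> 1" shows "(N - n + j) mod n = j mod n"
proof -
  have "N - n = (m - 1) * n" using assms by (simp add: diff_mult_distrib)
  then show ?thesis by simp
qed

lemma arith2: fixes N m n a :: nat assumes "N = m * n" "m \<ge> 1" "\<not> a < N - n" "a < N" shows "a = N - n + a mod n"
proof -
  have k: "N - n = (m - 1) * n" using assms by (simp add: diff_mult_distrib)
  have "a - (N - n) < n" using assms by linarith
  then have "(a - (N - n)) mod n = a - (N - n)" by simp
  moreover have "a = (N - n) + (a - (N - n))" using assms by simp
  ultimately have "a mod n = a - (N - n)" using k by (metis mod_mult_self3 mult.commute)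
  then show ?thesis using assms by simp
qed

lemma arith3: fixes N m n i :: nat assumes "N = m * n" "m \<ge> 1" "i < N - n" shows "N - n + i mod n < N" "N - n + i mod n \<noteq> i"
proof -
  have "n > 0" using assms by (cases n) auto
  then have "i mod n < n" by simp
  then show "N - n + i mod n < N" using assms by simp
  show "N - n + i mod n \<noteq> i" using assms by simp
qed

lemma Emat_entry:
  assumes "N = m * n" "m \<ge> 1" and xc: "x \<in> carrier_vec N" and i: "i < N - n"
  shows "(Emat N n *\<^sub>v x) $ i = x $ i - x $ (N - n + i mod n)"
proof -
  note a3 = arith3[OF assms(1,2) i]
  have "(Emat N n *\<^sub>v x) $ i = (\<Sum>j\<in>{0..<N}. (if j = i then 1 else if j = N - n + i mod n then -1 else 0) * x $ j)"
    using i xc by (simp add: Emat_def scalar_prod_def)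
  also have "\<dots> = (\<Sum>j\<in>{0..<N}. (if j = i then x $ j else 0)) + (\<Sum>j\<in>{0..<N}. (if j = N - n + i mod n then - x $ j else 0))"
    unfolding sum.distrib[symmetric] by (rule sum.cong, insert a3, auto)
  also have "\<dots> = x $ i - x $ (N - n + i mod n)" using a3 i by simp
  finally show ?thesis .
qed

lemma Emat_kernel:
  assumes m: "N = m * n" "m \<ge> 1"
  shows "mat_kernel (Emat N n :: 'a :: field mat) = cons_set N n"
proof (safe)
  fix x :: "'a vec" assume x: "x \<in> mat_kernel (Emat N n)"
  then have xc: "x \<in> carrier_vec N" and E: "Emat N n *\<^sub>v x = 0\<^sub>v (N - n)"
    unfolding mat_kernel_def by (auto simp: Emat_def)
  have eq: "x $ i = x $ (N - n + i mod n)" if i: "i < N - n" for i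
  proof -
    have "(Emat N n *\<^sub>v x) $ i = 0" using E i by simp
    then show ?thesis using Emat_entry[OF m xc i] by simp
  qed
  have eq2: "x $ a = x $ (N - n + a mod n)" if a: "a < N" for a
  proof (cases "a < N - n")
    case True then show ?thesis using eq by simp
  next
    case False then show ?thesis using arith2[OF m False a] by simp
  qed
  show "x \<in> cons_set N n" unfolding cons_set_def
  proof (safe intro!: xc)
    fix a assume a: "a < N"
    have "a mod n \<le> a" by simp
    then have "a mod n < N" using a by linarith
    from eq2[OF this] eq2[OF a] show "x $ a = x $ (a mod n)" by simp
  qed
next
  fix x :: "'a vec" assume x: "x \<in> cons_set N n"
  then have xc: "x \<in> carrier_vec N" and c: "\<And>a. a < N \<Longrightarrow> x $ a = x $ (a mod n)"
    unfolding cons_set_def by auto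
  have "Emat N n *\<^sub>v x = 0\<^sub>v (N - n)"
  proof (rule eq_vecI)
    show "dim_vec (Emat N n *\<^sub>v x) = dim_vec (0\<^sub>v (N - n) :: 'a vec)" by (simp add: Emat_def)
    fix i assume "i < dim_vec (0\<^sub>v (N - n) :: 'a vec)"
    then have i: "i < N - n" by simp
    note a3 = arith3[OF m i]
    show "(Emat N n *\<^sub>v x) $ i = 0\<^sub>v (N - n) $ i"
      unfolding Emat_entry[OF m xc i] using c[of i] c[OF a3(1)] arith1[OF m, of "i mod n"] i by simp
  qed
  then show "x \<in> mat_kernel (Emat N n)" using xc unfolding mat_kernel_def by (auto simp: Emat_def)
qed


lemma kernel_dim_cons:
  fixes A :: "'a :: field mat"
  assumes m: "N = m * n" "m \<ge> 1" and A: "A \<in> carrier_mat N N"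
    and K: "mat_kernel A = cons_set N n"
  shows "kernel_dim A = n"
proof -
  have Ec: "(Emat N n :: 'a mat) \<in> carrier_mat (N - n) N" by (simp add: Emat_def)
  have "kernel_dim A = kernel_dim (Emat N n :: 'a mat)"
    by (rule kernel_dim_cong, insert A Ec K Emat_kernel[OF m, where 'a='a], auto)
  also have "\<dots> = kernel.dim N (Emat N n :: 'a mat)" unfolding kernel_dim_def using Ec by simp
  also have "\<dots> = N - (N - n)" using find_base_vectors(6)[OF Emat_ref Ec] Emat_rows[where 'a='a] by simp
  also have "\<dots> = n" using m by simp
  finally show ?thesis .
qed



lemma full_rank_span:
  assumes C: "(C :: 'a :: field mat) \<in> carrier_mat r nc" and rk: "vec_space.rank r C = r"
  shows "module.span class_ring (module_vec TYPE('a) r) (set (cols C)) = carrier_vec r"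
proof -
  interpret vec_space "TYPE('a)" r .
  obtain S where S: "maximal S (\<lambda>T. T \<subseteq> set (cols C) \<and> lin_indpt T)"
    using maximal_exists[of "(\<lambda>T. T \<subseteq> set (cols C) \<and> lin_indpt T)" "card (set (cols C))" "{}"]
    by (meson List.finite_set card_mono empty_iff empty_subsetI finite_lin_indpt2 rev_finite_subset)
  have Ssub: "S \<subseteq> set (cols C)" and li: "lin_indpt S" using S unfolding maximal_def by auto
  have cc: "set (cols C) \<subseteq> carrier_vec r" using C cols_dim by blast
  have fin: "finite S" using Ssub finite_subset by blast
  have "rank C = card S" by (rule rank_card_indpt[OF C S])
  then have cardS: "card S = r" using rk by simp
  have "basis S"
    by (rule dim_li_is_basis[OF fin_dim fin _ li], insert Ssub cc cardS dim_is_n, auto)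
  then have "span S = carrier_vec r" unfolding basis_def by auto
  moreover have "span S \<subseteq> span (set (cols C))" by (rule span_is_monotone[OF Ssub])
  moreover have "span (set (cols C)) \<subseteq> carrier_vec r" using span_closed[OF cc] by auto
  ultimately show ?thesis by auto
qed



lemma self_scalar_zero: fixes y :: "real vec" assumes "y \<in> carrier_vec r" "y \<bullet> y = 0" shows "y = 0\<^sub>v r"
proof (rule eq_vecI)
  have "(\<Sum>i\<in>{0..<r}. y $ i * y $ i) = 0" using assms by (simp add: scalar_prod_def)
  then have "\<forall>i\<in>{0..<r}. y $ i * y $ i = 0" by (subst sum_nonneg_eq_0_iff[symmetric]) auto
  then show "\<And>i. i < dim_vec (0\<^sub>v r) \<Longrightarrow> y $ i = 0\<^sub>v r $ i" by simp
qed (insert assms, auto)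

lemma full_rank_transpose_inj:
  assumes C: "(C :: real mat) \<in> carrier_mat r nc" and rk: "vec_space.rank r C = r"
    and y: "y \<in> carrier_vec r" and T: "transpose_mat C *\<^sub>v y = 0\<^sub>v nc"
  shows "y = 0\<^sub>v r"
proof -
  interpret vec_space "TYPE(real)" r .
  have "y \<in> span (set (cols C))" using full_rank_span[OF C rk] y by simp
  from in_spanE[OF this] obtain a A where yA: "y = lincomb a A" and fin: "finite A" and Asub: "A \<subseteq> set (cols C)" by blast
  have cc: "set (cols C) \<subseteq> carrier_vec r" using C cols_dim by blast
  have uy: "u \<bullet> y = 0" if u: "u \<in> set (cols C)" for u
  proof -
    from u obtain j where j: "j < nc" and uj: "u = col C j" using C by (auto simp: cols_def)
    have "(transpose_mat C *\<^sub>v y) $ j = 0" using T j by simp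
    then show ?thesis using j C uj by simp
  qed
  have "y \<bullet> y = lincomb a A \<bullet> y" using yA by simp
  also have "\<dots> = (\<Sum>u\<in>A. (a u \<cdot>\<^sub>v u) \<bullet> y)"
    unfolding lincomb_def by (rule finsum_scalar_prod_sum, insert Asub cc y, auto)
  also have "\<dots> = 0" by (rule sum.neutral) (use Asub cc uy y in \<open>auto simp: subset_iff\<close>)
  finally show ?thesis by (rule self_scalar_zero[OF y])
qed



lemma gram_inv:
  assumes C: "(C :: real mat) \<in> carrier_mat r nc" and rk: "full_row_rank C"
  shows "inv_mat (C * transpose_mat C) \<in> carrier_mat r r \<and>
         (C * transpose_mat C) * inv_mat (C * transpose_mat C) = 1\<^sub>m r \<and>
         inv_mat (C * transpose_mat C) * (C * transpose_mat C) = 1\<^sub>m r"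
proof -
  let ?G = "C * transpose_mat C"
  have rk': "vec_space.rank r C = r" using rk C unfolding full_row_rank_def by simp
  have G: "?G \<in> carrier_mat r r" using C by simp
  have inj: "y = 0\<^sub>v r" if y: "y \<in> carrier_vec r" and Gy: "?G *\<^sub>v y = 0\<^sub>v r" for y
  proof -
    have Ty: "transpose_mat C *\<^sub>v y \<in> carrier_vec nc" using C y by simp
    have "(transpose_mat C *\<^sub>v y) \<bullet> (transpose_mat C *\<^sub>v y) = y \<bullet> (C *\<^sub>v (transpose_mat C *\<^sub>v y))"
      by (rule transpose_vec_mult_scalar[OF C Ty y])
    also have "C *\<^sub>v (transpose_mat C *\<^sub>v y) = ?G *\<^sub>v y" using C y by simp
    also have "y \<bullet> \<dots> = 0" using Gy y by simp
    finally have "transpose_mat C *\<^sub>v y = 0\<^sub>v nc" by (rule self_scalar_zero[OF Ty])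
    then show ?thesis by (rule full_rank_transpose_inj[OF C rk' y])
  qed
  have "det ?G \<noteq> 0" using det_0_iff_vec_prod_zero_field[OF G] inj by blast
  from det_non_zero_imp_unit[OF G this] have U: "?G \<in> Units (ring_mat TYPE(real) r ())" .
  obtain B where "mat_inverse ?G = Some B" using mat_inverse(1)[OF G, where b="()"] U by (cases "mat_inverse ?G") auto
  from mat_inverse(2)[OF G this] have B: "B \<in> carrier_mat r r \<and> ?G * B = 1\<^sub>m r \<and> B * ?G = 1\<^sub>m r" by auto
  have dr: "dim_row ?G = r" using C by simp
  show ?thesis unfolding inv_mat_def dr by (rule someI[of _ B], rule B)
qed

lemma proj_props:
  assumes C: "(C :: real mat) \<in> carrier_mat r nc" and rk: "full_row_rank C"
  shows "proj_mat C \<in> carrier_mat nc nc" "transpose_mat (proj_mat C) = proj_mat C"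
    "proj_mat C * proj_mat C = proj_mat C" "C * proj_mat C = C"
proof -
  let ?G = "C * transpose_mat C"
  define Gi where "Gi = inv_mat ?G"
  note gi = gram_inv[OF C rk, folded Gi_def]
  have G: "?G \<in> carrier_mat r r" using C by simp
  have Gi: "Gi \<in> carrier_mat r r" and GGi: "?G * Gi = 1\<^sub>m r" and GiG: "Gi * ?G = 1\<^sub>m r" using gi by auto
  have CT: "transpose_mat C \<in> carrier_mat nc r" using C by simp
  have P: "proj_mat C = transpose_mat C * Gi * C" unfolding proj_mat_def Gi_def ..
  show Pc: "proj_mat C \<in> carrier_mat nc nc" unfolding P using C Gi by simp
  have GT: "transpose_mat ?G = ?G" using C by (simp add: transpose_mult[OF C CT])
  have GiT: "transpose_mat Gi = Gi"
  proof -
    have "transpose_mat (?G * Gi) = 1\<^sub>m r" using GGi by simp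
    then have e: "transpose_mat Gi * ?G = 1\<^sub>m r" using transpose_mult[OF G Gi] GT by simp
    have "transpose_mat Gi = transpose_mat Gi * (?G * Gi)" using GGi Gi by simp
    also have "\<dots> = (transpose_mat Gi * ?G) * Gi" using Gi G by (simp add: assoc_mult_mat)
    also have "\<dots> = Gi" using e Gi by simp
    finally show ?thesis .
  qed
  show "transpose_mat (proj_mat C) = proj_mat C" unfolding P
    using transpose_mult[OF mult_carrier_mat[OF CT Gi] C] transpose_mult[OF CT Gi] GiT C Gi
    by (simp add: assoc_mult_mat[of _ nc r _ r _ nc])
  have CP: "C * proj_mat C = C"
  proof -
    have "C * proj_mat C = (?G * Gi) * C" unfolding P using C Gi CT
      by (simp add: assoc_mult_mat[of _ r nc _ r _ r] assoc_mult_mat[of _ r r _ r _ nc] assoc_mult_mat[of _ r nc _ r _ nc])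
    then show ?thesis using GGi C by simp
  qed
  then show "C * proj_mat C = C" .
  have "proj_mat C * proj_mat C = transpose_mat C * Gi * (C * proj_mat C)"
    unfolding P using C Gi CT by (simp add: assoc_mult_mat[of _ nc r _ r _ nc] assoc_mult_mat[of _ nc r _ nc _ nc] assoc_mult_mat[of _ r r _ nc _ nc])
  then show "proj_mat C * proj_mat C = proj_mat C" unfolding CP P[symmetric] .
qed



lemma re_mult: assumes A: "A \<in> carrier_mat k l" and x: "x \<in> carrier_vec l"
  shows "map_vec Re (map_mat complex_of_real A *\<^sub>v x) = A *\<^sub>v map_vec Re x"
    "map_vec Im (map_mat complex_of_real A *\<^sub>v x) = A *\<^sub>v map_vec Im x"
proof -
  show "map_vec Re (map_mat complex_of_real A *\<^sub>v x) = A *\<^sub>v map_vec Re x"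
    by (rule eq_vecI) (use A x in \<open>auto simp: scalar_prod_def Re_sum\<close>)
  show "map_vec Im (map_mat complex_of_real A *\<^sub>v x) = A *\<^sub>v map_vec Im x"
    by (rule eq_vecI) (use A x in \<open>auto simp: scalar_prod_def Im_sum\<close>)
qed

lemma cvec_zero_iff: assumes x: "x \<in> carrier_vec k"
  shows "x = 0\<^sub>v k \<longleftrightarrow> map_vec Re x = 0\<^sub>v k \<and> map_vec Im x = 0\<^sub>v k"
proof
  assume "map_vec Re x = 0\<^sub>v k \<and> map_vec Im x = 0\<^sub>v k"
  then have r: "map_vec Re x = 0\<^sub>v k" and i: "map_vec Im x = 0\<^sub>v k" by auto
  show "x = 0\<^sub>v k"
  proof (rule eq_vecI)
    fix p assume "p < dim_vec (0\<^sub>v k :: complex vec)"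
    then have p: "p < k" by simp
    have "Re (x $ p) = 0" using arg_cong[OF r, of "\<lambda>v. v $ p"] p x by simp
    moreover have "Im (x $ p) = 0" using arg_cong[OF i, of "\<lambda>v. v $ p"] p x by simp
    ultimately show "x $ p = 0\<^sub>v k $ p" using p by (simp add: complex_eq_iff)
  qed (use x in simp)
qed auto

lemma cons_re_im: assumes x: "(x :: complex vec) \<in> carrier_vec N"
  shows "x \<in> cons_set N n \<longleftrightarrow> map_vec Re x \<in> cons_set N n \<and> map_vec Im x \<in> cons_set N n"
proof -
  have "(\<forall>a<N. x $ a = x $ (a mod n)) \<longleftrightarrow> (\<forall>a<N. Re (x $ a) = Re (x $ (a mod n))) \<and> (\<forall>a<N. Im (x $ a) = Im (x $ (a mod n)))"
    by (auto simp: complex_eq_iff)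
  moreover have "a < N \<Longrightarrow> a mod n < N" for a
    by (metis le_less_trans mod_less_eq_dividend)
  ultimately show ?thesis using x unfolding cons_set_def by auto
qed

lemma pow2_mat: "A \<in> carrier_mat k k \<Longrightarrow> A ^\<^sub>m 2 = A * A"
  by (simp add: numeral_2_eq_2)


lemma mat_linear:
  assumes f: "\<And>x. x \<in> carrier_vec N \<Longrightarrow> f x \<in> carrier_vec N"
    and L: "\<And>x a. x \<in> carrier_vec N \<Longrightarrow> a < N \<Longrightarrow> f x $ a = (\<Sum>b<N. L a b * x $ b)"
    and x: "x \<in> carrier_vec N"
  shows "mat N N (\<lambda>(a,b). f (unit_vec N b) $ a) *\<^sub>v x = (f x :: 'a :: comm_ring_1 vec)"
proof (rule eq_vecI)
  show "dim_vec (mat N N (\<lambda>(a,b). f (unit_vec N b) $ a) *\<^sub>v x) = dim_vec (f x)" using f[OF x] by simp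
  fix a assume "a < dim_vec (f x)"
  then have a: "a < N" using f[OF x] by simp
  have e: "f (unit_vec N b) $ a = L a b" if b: "b < N" for b
  proof -
    have "f (unit_vec N b) $ a = (\<Sum>b'<N. L a b' * unit_vec N b $ b')" using L[OF _ a] by simp
    also have "\<dots> = (\<Sum>b'<N. if b' = b then L a b else 0)"
      by (rule sum.cong, auto simp: unit_vec_def)
    also have "\<dots> = L a b" using b by simp
    finally show ?thesis .
  qed
  have "(mat N N (\<lambda>(a,b). f (unit_vec N b) $ a) *\<^sub>v x) $ a = (\<Sum>b\<in>{0..<N}. f (unit_vec N b) $ a * x $ b)"
    using a x by (simp add: scalar_prod_def)
  also have "\<dots> = (\<Sum>b<N. L a b * x $ b)" by (rule sum.cong, auto simp: e)
  also have "\<dots> = f x $ a" using L[OF x a] by simp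
  finally show "(mat N N (\<lambda>(a,b). f (unit_vec N b) $ a) *\<^sub>v x) $ a = f x $ a" .
qed

lemma sum_delta_lt: "k < (N::nat) \<Longrightarrow> (\<Sum>b<N. (if b = k then 1 else 0) * (g b :: real)) = g k"
proof -
  assume k: "k < N"
  have "(\<Sum>b<N. (if b = k then 1 else 0) * g b) = (\<Sum>b<N. if b = k then g b else 0)"
    by (rule sum.cong) auto
  then show ?thesis using k by simp
qed

lemma idx_lt: "i < m \<Longrightarrow> q < n \<Longrightarrow> i * n + q < m * (n::nat)"
proof -
  assume "i < m" "q < n"
  then have "i * n + q < i * n + n" by simp
  also have "\<dots> = Suc i * n" by simp
  also have "\<dots> \<le> m * n" using \<open>i < m\<close> by (intro mult_le_mono1) simp
  finally show ?thesis .
qed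

lemma pred_cyc_eq:
  assumes m: "m > 0" and i: "i < m"
  shows "pred_cyc m i = (if i = 0 then m - 1 else i - 1)"
proof (cases "i = 0")
  case True
  have "m - 1 < m" using m by arith
  then show ?thesis unfolding pred_cyc_def using True by (simp only: add_0 mod_less) simp
next
  case False
  then have e: "i + m - 1 = (i - 1) + m" using i by arith
  have "i - 1 < m" using i by arith
  then show ?thesis unfolding pred_cyc_def e using False by (simp only: mod_add_self2 mod_less) simp
qed

lemma pred_cyc_sum:
  assumes m: "m > 0"
  shows "(\<Sum>i<m. g (pred_cyc m i)) = (\<Sum>i<m. (g i :: real))"
proof (rule sum.reindex_bij_witness[of _ "\<lambda>i. (i+1) mod m" "pred_cyc m"])
  fix i assume i: "i \<in> {..<m}"
  then have i: "i < m" by simp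
  note pc = pred_cyc_eq[OF m i]
  have sc: "(i + 1) mod m = (if i + 1 = m then 0 else i + 1)"
    using i by (cases "i + 1 = m") (simp_all only: mod_self mod_less, simp_all)
  show "pred_cyc m i \<in> {..<m}" using pc i by auto
  show "(pred_cyc m i + 1) mod m = i"
  proof (cases "i = 0")
    case True
    have "m - 1 + 1 = m" using m by arith
    then show ?thesis using pc True by simp
  next
    case False
    have "i - 1 + 1 = i" using False by arith
    then show ?thesis using pc False i by simp
  qed
  show "(i + 1) mod m \<in> {..<m}" using sc i by auto
  show "pred_cyc m ((i + 1) mod m) = i"
  proof (cases "i + 1 = m")
    case True
    then show ?thesis using sc pred_cyc_eq[OF m m] by simp
  next
    case False
    then have i1: "i + 1 < m" using i by simp
    show ?thesis using sc False pred_cyc_eq[OF m i1] by simp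
  qed
qed simp

lemma pred_cyc_lt: "m > 0 \<Longrightarrow> pred_cyc m i < m" unfolding pred_cyc_def by simp

context
  fixes m n :: nat and C :: "nat \<Rightarrow> real mat"
  assumes m2: "m \<ge> 2"
    and dimC: "\<And>i. i < m \<Longrightarrow> dim_col (C i) = n"
    and rkC: "\<And>i. i < m \<Longrightarrow> full_row_rank (C i)"
begin

lemma Cc: assumes "i < m" shows "C i \<in> carrier_mat (dim_row (C i)) n"
  unfolding carrier_mat_def using dimC[OF assms] by simp

lemma Pc: assumes "i < m" shows "proj_mat (C i) \<in> carrier_mat n n"
  by (rule proj_props(1)[OF Cc[OF assms] rkC[OF assms]])

lemma cyc_map_lin:
  assumes a: "a < m * n"
  shows "cyc_map m n C x $ a = (\<Sum>b<m*n. ((if b = a then 1 else 0) - 1/2 * (\<Sum>q<n. proj_mat (C (a div n)) $$ (a mod n, q) *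
      ((if b = (a div n) * n + q then 1 else 0) - (if b = pred_cyc m (a div n) * n + q then 1 else 0)))) * x $ b)"
proof -
  let ?i = "a div n" and ?p = "a mod n" and ?j = "pred_cyc m (a div n)"
  let ?P = "proj_mat (C ?i)"
  have n0: "n > 0" using a by (cases n) auto
  have i: "?i < m" using a by (simp add: less_mult_imp_div_less)
  have p: "?p < n" using n0 by simp
  have j: "?j < m" using pred_cyc_lt m2 by simp
  have P: "?P \<in> carrier_mat n n" using Pc[OF i] .
  have "cyc_map m n C x $ a = x $ a - 1/2 * (\<Sum>q<n. ?P $$ (?p, q) * (x $ (?i * n + q) - x $ (?j * n + q)))"
    unfolding cyc_map_def using a P p by (simp add: scalar_prod_def blk_def lessThan_atLeast0)
  also have "\<dots> = (\<Sum>b<m*n. ((if b = a then 1 else 0) - 1/2 * (\<Sum>q<n. ?P $$ (?p, q) *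
      ((if b = ?i * n + q then 1 else 0) - (if b = ?j * n + q then 1 else 0)))) * x $ b)"
  proof -
    let ?d1 = "\<lambda>q b. (if b = ?i * n + q then 1 else 0) :: real"
    let ?d2 = "\<lambda>q b. (if b = ?j * n + q then 1 else 0) :: real"
    have inner: "(\<Sum>b<m*n. ?P $$ (?p, q) * (?d1 q b - ?d2 q b) * x $ b) = ?P $$ (?p, q) * (x $ (?i * n + q) - x $ (?j * n + q))"
      if q: "q < n" for q
    proof -
      have "(\<Sum>b<m*n. ?P $$ (?p, q) * (?d1 q b - ?d2 q b) * x $ b) = ?P $$ (?p, q) * ((\<Sum>b<m*n. ?d1 q b * x $ b) - (\<Sum>b<m*n. ?d2 q b * x $ b))"
        unfolding sum_distrib_left sum_subtractf[symmetric] by (rule sum.cong, auto simp: algebra_simps)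
      also have "\<dots> = ?P $$ (?p, q) * (x $ (?i * n + q) - x $ (?j * n + q))"
        using sum_delta_lt[OF idx_lt[OF i q], of "\<lambda>b. x $ b"] sum_delta_lt[OF idx_lt[OF j q], of "\<lambda>b. x $ b"] by simp
      finally show ?thesis .
    qed
    have "(\<Sum>b<m*n. ((if b = a then 1 else 0) - 1/2 * (\<Sum>q<n. ?P $$ (?p, q) * (?d1 q b - ?d2 q b))) * x $ b)
       = (\<Sum>b<m*n. (if b = a then 1 else 0) * x $ b) - 1/2 * (\<Sum>b<m*n. \<Sum>q<n. ?P $$ (?p, q) * (?d1 q b - ?d2 q b) * x $ b)"
      unfolding sum_distrib_left sum_subtractf[symmetric] by (rule sum.cong, auto simp: algebra_simps sum_distrib_right sum_distrib_left)
    also have "(\<Sum>b<m*n. \<Sum>q<n. ?P $$ (?p, q) * (?d1 q b - ?d2 q b) * x $ b) = (\<Sum>q<n. \<Sum>b<m*n. ?P $$ (?p, q) * (?d1 q b - ?d2 q b) * x $ b)"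
      by (rule sum.swap)
    also have "\<dots> = (\<Sum>q<n. ?P $$ (?p, q) * (x $ (?i * n + q) - x $ (?j * n + q)))"
      by (rule sum.cong, auto simp: inner)
    also have "(\<Sum>b<m*n. (if b = a then 1 else 0) * x $ b) = x $ a" using sum_delta_lt[OF a] .
    finally show ?thesis by simp
  qed
  finally show ?thesis by simp
qed


lemma Mmul:
  assumes x: "x \<in> carrier_vec (m*n)"
  shows "cyc_matrix m n C *\<^sub>v x = cyc_map m n C x"
  unfolding cyc_matrix_def
proof (rule mat_linear[where L = "\<lambda>a b. (if b = a then 1 else 0) - 1/2 * (\<Sum>q<n. proj_mat (C (a div n)) $$ (a mod n, q) *
      ((if b = (a div n) * n + q then 1 else 0) - (if b = pred_cyc m (a div n) * n + q then 1 else 0)))"])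
  show "x \<in> carrier_vec (m * n)" by (rule x)
  show "\<And>x. x \<in> carrier_vec (m * n) \<Longrightarrow> cyc_map m n C x \<in> carrier_vec (m * n)" by (simp add: cyc_map_def)
  show "\<And>x a. x \<in> carrier_vec (m * n) \<Longrightarrow> a < m * n \<Longrightarrow> cyc_map m n C x $ a = (\<Sum>b<m * n. ((if b = a then 1 else 0) - 1/2 * (\<Sum>q<n. proj_mat (C (a div n)) $$ (a mod n, q) *
      ((if b = (a div n) * n + q then 1 else 0) - (if b = pred_cyc m (a div n) * n + q then 1 else 0)))) * x $ b)"
    by (rule cyc_map_lin)
qed

lemma blk_carrier[simp]: "blk n x i \<in> carrier_vec n" by (simp add: blk_def)

lemma blk_cyc:
  assumes i: "i < m"
  shows "blk n (cyc_map m n C x) i = blk n x i - (1/2) \<cdot>\<^sub>v (proj_mat (C i) *\<^sub>v (blk n x i - blk n x (pred_cyc m i)))"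
proof (rule eq_vecI)
  have P: "proj_mat (C i) \<in> carrier_mat n n" using Pc[OF i] .
  show "dim_vec (blk n (cyc_map m n C x) i) = dim_vec (blk n x i - (1/2) \<cdot>\<^sub>v (proj_mat (C i) *\<^sub>v (blk n x i - blk n x (pred_cyc m i))))"
    using carrier_matD[OF P] by (simp add: blk_def)
  fix p assume "p < dim_vec (blk n x i - (1/2) \<cdot>\<^sub>v (proj_mat (C i) *\<^sub>v (blk n x i - blk n x (pred_cyc m i))))"
  then have p: "p < n" using carrier_matD[OF P] by (simp add: blk_def)
  have d: "(i * n + p) div n = i" "(i * n + p) mod n = p" using p by auto
  show "blk n (cyc_map m n C x) i $ p = (blk n x i - (1/2) \<cdot>\<^sub>v (proj_mat (C i) *\<^sub>v (blk n x i - blk n x (pred_cyc m i)))) $ p"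
    using p P carrier_matD[OF P] idx_lt[OF i p] unfolding blk_def cyc_map_def d by simp
qed

lemma blk_eq:
  assumes x: "x \<in> carrier_vec (m*n)" and y: "y \<in> carrier_vec (m*n)"
    and b: "\<And>i. i < m \<Longrightarrow> blk n x i = blk n y i"
  shows "x = y"
proof (rule eq_vecI)
  show "dim_vec x = dim_vec y" using x y by simp
  fix a assume "a < dim_vec y"
  then have a: "a < m * n" using y by simp
  then have n0: "n > 0" by (cases n) auto
  have i: "a div n < m" using a by (simp add: less_mult_imp_div_less)
  have p: "a mod n < n" using n0 by simp
  have "x $ a = blk n x (a div n) $ (a mod n)" using p by (simp add: blk_def)
  also have "\<dots> = blk n y (a div n) $ (a mod n)" using b[OF i] by simp
  also have "\<dots> = y $ a" using p by (simp add: blk_def)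
  finally show "x $ a = y $ a" .
qed


lemma Mr_carrier: "cyc_matrix m n C \<in> carrier_mat (m*n) (m*n)" by (simp add: cyc_matrix_def)

lemma Nmul: assumes x: "x \<in> carrier_vec (m*n)"
  shows "char_matrix (cyc_matrix m n C) 1 *\<^sub>v x = cyc_matrix m n C *\<^sub>v x - x"
proof (rule eq_vecI)
  show "dim_vec (char_matrix (cyc_matrix m n C) 1 *\<^sub>v x) = dim_vec (cyc_matrix m n C *\<^sub>v x - x)"
    using Mr_carrier x by (simp add: char_matrix_def)
  fix a assume "a < dim_vec (cyc_matrix m n C *\<^sub>v x - x)"
  then have a: "a < m * n" using Mr_carrier x by simp
  have "(char_matrix (cyc_matrix m n C) 1 *\<^sub>v x) $ a = row (cyc_matrix m n C) a \<bullet> x + row ((-1) \<cdot>\<^sub>m 1\<^sub>m (m*n)) a \<bullet> x"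
    using a x Mr_carrier by (simp add: char_matrix_def add_scalar_prod_distrib[of _ "m*n"])
  also have "row ((-1) \<cdot>\<^sub>m 1\<^sub>m (m*n)) a \<bullet> x = - (x $ a)"
  proof -
    have "row ((-1) \<cdot>\<^sub>m 1\<^sub>m (m*n)) a = (-1) \<cdot>\<^sub>v unit_vec (m*n) a" using a
      by (intro eq_vecI) (auto simp: unit_vec_def)
    then show ?thesis using a x by simp
  qed
  finally show "(char_matrix (cyc_matrix m n C) 1 *\<^sub>v x) $ a = (cyc_matrix m n C *\<^sub>v x - x) $ a"
    using a x Mr_carrier by simp
qed

definition D :: "real vec \<Rightarrow> nat \<Rightarrow> real vec" where
  "D x i = blk n x i - blk n x (pred_cyc m i)"

lemma D_carrier[simp]: "D x i \<in> carrier_vec n" by (simp add: D_def)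

lemma blkN: assumes i: "i < m" and x: "x \<in> carrier_vec (m*n)"
  shows "blk n (char_matrix (cyc_matrix m n C) 1 *\<^sub>v x) i = (-(1/2)) \<cdot>\<^sub>v (proj_mat (C i) *\<^sub>v D x i)"
proof (rule eq_vecI)
  have P: "proj_mat (C i) \<in> carrier_mat n n" using Pc[OF i] .
  show "dim_vec (blk n (char_matrix (cyc_matrix m n C) 1 *\<^sub>v x) i) = dim_vec ((-(1/2)) \<cdot>\<^sub>v (proj_mat (C i) *\<^sub>v D x i))"
    using carrier_matD[OF P] by (simp add: blk_def)
  fix p assume "p < dim_vec ((-(1/2)) \<cdot>\<^sub>v (proj_mat (C i) *\<^sub>v D x i))"
  then have p: "p < n" using carrier_matD[OF P] by simp
  have ip: "i * n + p < m * n" by (rule idx_lt[OF i p])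
  have "blk n (char_matrix (cyc_matrix m n C) 1 *\<^sub>v x) i $ p = cyc_map m n C x $ (i * n + p) - x $ (i * n + p)"
    using p ip x Mr_carrier unfolding blk_def Nmul[OF x] Mmul[OF x] by (simp add: cyc_map_def)
  also have "cyc_map m n C x $ (i * n + p) = blk n (cyc_map m n C x) i $ p" using p by (simp add: blk_def)
  also have "\<dots> = x $ (i * n + p) - (1/2) * (proj_mat (C i) *\<^sub>v D x i) $ p"
    unfolding blk_cyc[OF i] D_def[symmetric] using p P carrier_matD[OF P] by (simp add: blk_def)
  finally show "blk n (char_matrix (cyc_matrix m n C) 1 *\<^sub>v x) i $ p = ((-(1/2)) \<cdot>\<^sub>v (proj_mat (C i) *\<^sub>v D x i)) $ p"
    using p P carrier_matD[OF P] by simp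
qed


lemma Nc: "x \<in> carrier_vec (m*n) \<Longrightarrow> char_matrix (cyc_matrix m n C) 1 *\<^sub>v x \<in> carrier_vec (m*n)"
  unfolding carrier_vec_def using Mr_carrier by (simp add: char_matrix_def)

lemma vec_minus_zero: assumes "u \<in> carrier_vec k" "v \<in> carrier_vec k" "u - v = 0\<^sub>v k"
  shows "u = (v :: real vec)"
proof (rule eq_vecI)
  fix p assume "p < dim_vec v"
  then have p: "p < k" using assms by simp
  have "(u - v) $ p = 0" using assms(3) p by simp
  then show "u $ p = v $ p" using p assms(1,2) by simp
qed (insert assms, simp)

lemma smult_half_zero: assumes "w \<in> carrier_vec k" "(-(1/2)) \<cdot>\<^sub>v w = 0\<^sub>v k"
  shows "w = (0\<^sub>v k :: real vec)"
proof (rule eq_vecI)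
  fix p assume "p < dim_vec (0\<^sub>v k :: real vec)"
  then have p: "p < k" by simp
  have "((-(1/2)) \<cdot>\<^sub>v w) $ p = 0" using assms(2) p by simp
  then show "w $ p = 0\<^sub>v k $ p" using p assms(1) by simp
qed (insert assms, simp)

lemma blk_zero: assumes i: "i < m" shows "blk n (0\<^sub>v (m*n)) i = 0\<^sub>v n"
proof (rule eq_vecI)
  fix p assume "p < dim_vec (0\<^sub>v n :: real vec)"
  then have p: "p < n" by simp
  show "blk n (0\<^sub>v (m*n)) i $ p = 0\<^sub>v n $ p" using idx_lt[OF i p] p by (simp add: blk_def)
qed (simp add: blk_def)

lemma mat_vec_zero: assumes "A \<in> carrier_mat k l" shows "A *\<^sub>v 0\<^sub>v l = (0\<^sub>v k :: real vec)"
  by (rule eq_vecI) (use assms in \<open>auto simp: scalar_prod_def\<close>)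

lemma CP_zero: assumes i: "i < m" and v: "v \<in> carrier_vec n" and Pv: "proj_mat (C i) *\<^sub>v v = 0\<^sub>v n"
  shows "C i *\<^sub>v v = 0\<^sub>v (dim_row (C i))"
proof -
  have e: "C i * proj_mat (C i) = C i" by (rule proj_props(4)[OF Cc[OF i] rkC[OF i]])
  have "C i *\<^sub>v v = (C i * proj_mat (C i)) *\<^sub>v v" unfolding e ..
  also have "\<dots> = C i *\<^sub>v (proj_mat (C i) *\<^sub>v v)" by (rule assoc_mult_mat_vec[OF Cc[OF i] Pc[OF i] v])
  also have "\<dots> = 0\<^sub>v (dim_row (C i))" unfolding Pv by (rule mat_vec_zero[OF Cc[OF i]])
  finally show ?thesis .
qed

lemma cons_blk: assumes x: "x \<in> carrier_vec (m*n)"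
  shows "x \<in> cons_set (m*n) n \<longleftrightarrow> (\<forall>i<m. blk n x i = blk n x 0)"
proof
  assume c: "x \<in> cons_set (m*n) n"
  show "\<forall>i<m. blk n x i = blk n x 0"
  proof (intro allI impI eq_vecI)
    fix i p assume i: "i < m" and "p < dim_vec (blk n x 0)"
    then have p: "p < n" by (simp add: blk_def)
    have "m > 0" using m2 by simp
    have c': "\<forall>a<m*n. x $ a = x $ (a mod n)" using c unfolding cons_set_def by blast
    have "x $ (i * n + p) = x $ ((i * n + p) mod n)" using c' idx_lt[OF i p] by blast
    also have "(i * n + p) mod n = 0 * n + p" using p by simp
    finally show "blk n x i $ p = blk n x 0 $ p" using p by (simp add: blk_def)
  qed (simp add: blk_def)
next
  assume b: "\<forall>i<m. blk n x i = blk n x 0"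
  show "x \<in> cons_set (m*n) n" unfolding cons_set_def
  proof (safe intro!: x)
    fix a assume a: "a < m * n"
    then have n0: "n > 0" by (cases n) auto
    have i: "a div n < m" using a by (simp add: less_mult_imp_div_less)
    have p: "a mod n < n" using n0 by simp
    have "x $ a = blk n x (a div n) $ (a mod n)" using p by (simp add: blk_def)
    also have "\<dots> = blk n x 0 $ (a mod n)" using b[rule_format, OF i] by simp
    also have "\<dots> = x $ (a mod n)" using p by (simp add: blk_def)
    finally show "x $ a = x $ (a mod n)" .
  qed
qed

context
  assumes wc: "\<And>x :: nat \<Rightarrow> real vec. (\<forall>i<m. x i \<in> carrier_vec n) \<Longrightarrow>
           (\<forall>i<m. C i *\<^sub>v x i = C i *\<^sub>v x (pred_cyc m i)) \<Longrightarrow>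
           (\<forall>i<m. \<forall>j<m. x i = x j)"
begin

lemma R1: assumes x: "x \<in> carrier_vec (m*n)"
  shows "char_matrix (cyc_matrix m n C) 1 *\<^sub>v x = 0\<^sub>v (m*n) \<longleftrightarrow> x \<in> cons_set (m*n) n"
proof
  assume N0: "char_matrix (cyc_matrix m n C) 1 *\<^sub>v x = 0\<^sub>v (m*n)"
  have CD: "C i *\<^sub>v blk n x i = C i *\<^sub>v blk n x (pred_cyc m i)" if i: "i < m" for i
  proof -
    have "(-(1/2)) \<cdot>\<^sub>v (proj_mat (C i) *\<^sub>v D x i) = blk n (char_matrix (cyc_matrix m n C) 1 *\<^sub>v x) i"
      by (rule blkN[OF i x, symmetric])
    also have "\<dots> = blk n (0\<^sub>v (m*n)) i" unfolding N0 ..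
    also have "\<dots> = 0\<^sub>v n" by (rule blk_zero[OF i])
    finally have "(-(1/2)) \<cdot>\<^sub>v (proj_mat (C i) *\<^sub>v D x i) = 0\<^sub>v n" .
    then have "proj_mat (C i) *\<^sub>v D x i = 0\<^sub>v n"
      by (rule smult_half_zero[rotated], insert Pc[OF i], simp)
    from CP_zero[OF i D_carrier this] have "C i *\<^sub>v D x i = 0\<^sub>v (dim_row (C i))" .
    then have "C i *\<^sub>v blk n x i - C i *\<^sub>v blk n x (pred_cyc m i) = 0\<^sub>v (dim_row (C i))"
      unfolding D_def by (subst (asm) mult_minus_distrib_mat_vec[OF Cc[OF i] blk_carrier blk_carrier])
    then show ?thesis by (rule vec_minus_zero[OF mult_mat_vec_carrier[OF Cc[OF i] blk_carrier] mult_mat_vec_carrier[OF Cc[OF i] blk_carrier]])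
  qed
  have "\<forall>i<m. \<forall>j<m. blk n x i = blk n x j"
    by (rule wc) (use CD in auto)
  moreover have "0 < m" using m2 by simp
  ultimately show "x \<in> cons_set (m*n) n" unfolding cons_blk[OF x] by blast
next
  assume c: "x \<in> cons_set (m*n) n"
  have b: "\<forall>i<m. blk n x i = blk n x 0" using c cons_blk[OF x] by blast
  show "char_matrix (cyc_matrix m n C) 1 *\<^sub>v x = 0\<^sub>v (m*n)"
  proof (rule blk_eq[OF Nc[OF x] zero_carrier_vec])
    fix i assume i: "i < m"
    have pl: "pred_cyc m i < m" using pred_cyc_lt[of m i] m2 by simp
    have "D x i = 0\<^sub>v n" unfolding D_def b[rule_format, OF i] b[rule_format, OF pl] by simp
    then show "blk n (char_matrix (cyc_matrix m n C) 1 *\<^sub>v x) i = blk n (0\<^sub>v (m * n)) i"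
      unfolding blkN[OF i x] blk_zero[OF i] \<open>D x i = 0\<^sub>v n\<close> mat_vec_zero[OF Pc[OF i]]
      by (intro eq_vecI) auto
  qed
qed


lemma D_scalar: assumes x: "x \<in> carrier_vec (m*n)" and c: "c \<in> carrier_vec n"
  shows "(\<Sum>i<m. c \<bullet> D x i) = 0"
proof -
  have "(\<Sum>i<m. c \<bullet> D x i) = (\<Sum>i<m. \<Sum>p<n. c $ p * x $ (i * n + p) - c $ p * x $ (pred_cyc m i * n + p))"
    by (rule sum.cong[OF refl]) (use c in \<open>auto simp: scalar_prod_def D_def blk_def lessThan_atLeast0 right_diff_distrib\<close>)
  also have "\<dots> = (\<Sum>p<n. \<Sum>i<m. c $ p * x $ (i * n + p) - c $ p * x $ (pred_cyc m i * n + p))"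
    by (rule sum.swap)
  also have "\<dots> = (\<Sum>p<n. c $ p * ((\<Sum>i<m. x $ (i * n + p)) - (\<Sum>i<m. x $ (pred_cyc m i * n + p))))"
    by (rule sum.cong[OF refl]) (simp add: sum_subtractf sum_distrib_left right_diff_distrib)
  also have "\<dots> = 0"
  proof (rule sum.neutral, rule ballI)
    fix p
    have "m > 0" using m2 by simp
    from pred_cyc_sum[OF this, of "\<lambda>i. x $ (i * n + p)"]
    show "c $ p * ((\<Sum>i<m. x $ (i * n + p)) - (\<Sum>i<m. x $ (pred_cyc m i * n + p))) = 0" by simp
  qed
  finally show ?thesis .
qed

lemma c_D: assumes i: "i < m" and c: "c \<in> carrier_vec n"
  and hc: "c = (-(1/2)) \<cdot>\<^sub>v (proj_mat (C i) *\<^sub>v D x i)"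
  shows "c \<bullet> D x i = -2 * (c \<bullet> c)"
proof -
  let ?P = "proj_mat (C i)" and ?w = "proj_mat (C i) *\<^sub>v D x i"
  have P: "?P \<in> carrier_mat n n" by (rule Pc[OF i])
  have wc: "?w \<in> carrier_vec n" using P by simp
  have w: "?w = (-2) \<cdot>\<^sub>v c"
  proof (rule eq_vecI)
    fix p assume "p < dim_vec ((-2) \<cdot>\<^sub>v c)"
    then have p: "p < n" using c by simp
    have "c $ p = (-(1/2)) * ?w $ p" using arg_cong[OF hc, of "\<lambda>v. v $ p"] p carrier_vecD[OF wc] by simp
    then show "?w $ p = ((-2) \<cdot>\<^sub>v c) $ p" using p c by simp
  qed (use c carrier_matD[OF P] in simp)
  have PP: "?P * ?P = ?P" by (rule proj_props(3)[OF Cc[OF i] rkC[OF i]])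
  have PT: "transpose_mat ?P = ?P" by (rule proj_props(2)[OF Cc[OF i] rkC[OF i]])
  have Pw: "?P *\<^sub>v ?w = ?w"
  proof -
    have "?P *\<^sub>v ?w = (?P * ?P) *\<^sub>v D x i" by (rule assoc_mult_mat_vec[OF P P D_carrier, symmetric])
    then show ?thesis unfolding PP .
  qed
  have Pcc: "?P *\<^sub>v c = c"
  proof -
    have "?P *\<^sub>v c = (-(1/2)) \<cdot>\<^sub>v (?P *\<^sub>v ?w)" unfolding hc by (rule mult_mat_vec[OF P wc])
    also have "\<dots> = c" unfolding Pw hc[symmetric] ..
    finally show ?thesis .
  qed
  have "c \<bullet> D x i = (transpose_mat ?P *\<^sub>v c) \<bullet> D x i" unfolding PT Pcc ..
  also have "\<dots> = c \<bullet> ?w" by (rule transpose_vec_mult_scalar[OF P D_carrier c])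
  also have "\<dots> = -2 * (c \<bullet> c)" unfolding w by (rule scalar_prod_smult_distrib[OF c c])
  finally show ?thesis .
qed


lemma R2: assumes x: "x \<in> carrier_vec (m*n)"
  and N2: "char_matrix (cyc_matrix m n C) 1 *\<^sub>v (char_matrix (cyc_matrix m n C) 1 *\<^sub>v x) = 0\<^sub>v (m*n)"
  shows "char_matrix (cyc_matrix m n C) 1 *\<^sub>v x = 0\<^sub>v (m*n)"
proof -
  let ?z = "char_matrix (cyc_matrix m n C) 1 *\<^sub>v x"
  have zc: "?z \<in> carrier_vec (m*n)" by (rule Nc[OF x])
  have "?z \<in> cons_set (m*n) n" using R1[OF zc] N2 by blast
  then have b: "\<forall>i<m. blk n ?z i = blk n ?z 0" using cons_blk[OF zc] by blast
  define c where "c = blk n ?z 0"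
  have c: "c \<in> carrier_vec n" unfolding c_def by simp
  have hc: "c = (-(1/2)) \<cdot>\<^sub>v (proj_mat (C i) *\<^sub>v D x i)" if i: "i < m" for i
    unfolding c_def b[rule_format, OF i, symmetric] by (rule blkN[OF i x])
  have "(\<Sum>i<m. c \<bullet> D x i) = (\<Sum>i<m. -2 * (c \<bullet> c))"
    by (rule sum.cong[OF refl], rule c_D[OF _ c hc], auto)
  then have "real m * (-2 * (c \<bullet> c)) = 0" using D_scalar[OF x c] by simp
  then have "c \<bullet> c = 0" using m2 by simp
  then have c0: "c = 0\<^sub>v n" by (rule self_scalar_zero[OF c])
  show ?thesis
  proof (rule blk_eq[OF zc zero_carrier_vec])
    fix i assume i: "i < m"
    show "blk n ?z i = blk n (0\<^sub>v (m * n)) i" unfolding blk_zero[OF i] b[rule_format, OF i] c_def[symmetric] c0 ..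
  qed
qed


lemma final:
  "alg_mult (cyc_matrix m n C) 1 = n \<and> geom_mult (cyc_matrix m n C) 1 = n"
proof -
  let ?N = "m * n"
  let ?Mr = "cyc_matrix m n C"
  let ?Nr = "char_matrix ?Mr 1"
  let ?Mc = "map_mat complex_of_real ?Mr"
  let ?Nc = "char_matrix ?Mc 1"
  have m1: "m \<ge> 1" using m2 by simp
  have Mr: "?Mr \<in> carrier_mat ?N ?N" by (rule Mr_carrier)
  have Nr: "?Nr \<in> carrier_mat ?N ?N" using Mr by simp
  have Mc: "?Mc \<in> carrier_mat ?N ?N" using Mr by simp
  have NcNr: "?Nc = map_mat complex_of_real ?Nr"
    by (rule eq_matI) (use Mr in \<open>auto simp: char_matrix_def\<close>)
  have Nc: "?Nc \<in> carrier_mat ?N ?N" using Mc by simp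
  have kerR: "mat_kernel ?Nr = (cons_set ?N n :: real vec set)"
  proof (rule Set.set_eqI, rule iffI)
    fix x :: "real vec" assume "x \<in> mat_kernel ?Nr"
    then have x: "x \<in> carrier_vec ?N" and "?Nr *\<^sub>v x = 0\<^sub>v ?N" using Nr unfolding mat_kernel_def by auto
    then show "x \<in> cons_set ?N n" using R1[OF x] by blast
  next
    fix x :: "real vec" assume c: "x \<in> cons_set ?N n"
    then have x: "x \<in> carrier_vec ?N" unfolding cons_set_def by blast
    then have "?Nr *\<^sub>v x = 0\<^sub>v ?N" using R1[OF x] c by blast
    then show "x \<in> mat_kernel ?Nr" using x Nr unfolding mat_kernel_def by auto
  qed
  have geom: "geom_mult ?Mr 1 = n"
    unfolding geom_mult_def by (rule kernel_dim_cons[OF refl m1 Nr kerR])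
  have reim: "map_vec Re (?Nc *\<^sub>v x) = ?Nr *\<^sub>v map_vec Re x \<and> map_vec Im (?Nc *\<^sub>v x) = ?Nr *\<^sub>v map_vec Im x"
    if x: "x \<in> carrier_vec ?N" for x
    unfolding NcNr using re_mult[OF Nr x] by simp
  have zc: "?Nc *\<^sub>v x = 0\<^sub>v ?N \<longleftrightarrow> ?Nr *\<^sub>v map_vec Re x = 0\<^sub>v ?N \<and> ?Nr *\<^sub>v map_vec Im x = 0\<^sub>v ?N"
    if x: "x \<in> carrier_vec ?N" for x
  proof -
    have "?Nc *\<^sub>v x \<in> carrier_vec ?N" using Nc x by simp
    from cvec_zero_iff[OF this] reim[OF x] show ?thesis by simp
  qed
  have kerC: "mat_kernel ?Nc = (cons_set ?N n :: complex vec set)"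
  proof (rule Set.set_eqI)
    fix x :: "complex vec"
    show "x \<in> mat_kernel ?Nc \<longleftrightarrow> x \<in> cons_set ?N n"
    proof (cases "x \<in> carrier_vec ?N")
      case True
      have re: "map_vec Re x \<in> carrier_vec ?N" and im: "map_vec Im x \<in> carrier_vec ?N" using True by auto
      have "x \<in> mat_kernel ?Nc \<longleftrightarrow> ?Nc *\<^sub>v x = 0\<^sub>v ?N" using True Nc unfolding mat_kernel_def by auto
      also have "\<dots> \<longleftrightarrow> map_vec Re x \<in> cons_set ?N n \<and> map_vec Im x \<in> cons_set ?N n"
        unfolding zc[OF True] R1[OF re] R1[OF im] ..
      also have "\<dots> \<longleftrightarrow> x \<in> cons_set ?N n" using cons_re_im[OF True] by simp
      finally show ?thesis .
    next
      case False
      then show ?thesis using Nc unfolding mat_kernel_def cons_set_def by auto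
    qed
  qed
  have ker2: "mat_kernel (?Nc ^\<^sub>m 2) = mat_kernel ?Nc"
  proof (rule Set.set_eqI)
    fix x :: "complex vec"
    have P2: "?Nc ^\<^sub>m 2 = ?Nc * ?Nc" by (rule pow2_mat[OF Nc])
    show "x \<in> mat_kernel (?Nc ^\<^sub>m 2) \<longleftrightarrow> x \<in> mat_kernel ?Nc"
    proof (cases "x \<in> carrier_vec ?N")
      case True
      have re: "map_vec Re x \<in> carrier_vec ?N" and im: "map_vec Im x \<in> carrier_vec ?N" using True by auto
      have NcxC: "?Nc *\<^sub>v x \<in> carrier_vec ?N" using Nc True by simp
      have "x \<in> mat_kernel (?Nc ^\<^sub>m 2) \<longleftrightarrow> ?Nc *\<^sub>v (?Nc *\<^sub>v x) = 0\<^sub>v ?N"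
        using True Nc unfolding mat_kernel_def P2 by auto
      also have "\<dots> \<longleftrightarrow> ?Nr *\<^sub>v (?Nr *\<^sub>v map_vec Re x) = 0\<^sub>v ?N \<and> ?Nr *\<^sub>v (?Nr *\<^sub>v map_vec Im x) = 0\<^sub>v ?N"
        unfolding zc[OF NcxC] using reim[OF True] by simp
      also have "\<dots> \<longleftrightarrow> ?Nr *\<^sub>v map_vec Re x = 0\<^sub>v ?N \<and> ?Nr *\<^sub>v map_vec Im x = 0\<^sub>v ?N"
        using R2[OF re] R2[OF im] mat_vec_zero[OF Nr] by auto
      also have "\<dots> \<longleftrightarrow> x \<in> mat_kernel ?Nc" unfolding zc[OF True, symmetric]
        using True Nc unfolding mat_kernel_def by auto
      finally show ?thesis .
    next
      case False
      then show ?thesis using Nc unfolding mat_kernel_def P2 by auto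
    qed
  qed
  have "alg_mult ?Mr 1 = Polynomial.order (complex_of_real 1) (map_poly complex_of_real (char_poly ?Mr))"
    unfolding alg_mult_def order_of_real_poly ..
  also have "map_poly complex_of_real (char_poly ?Mr) = char_poly ?Mc"
    by (rule of_real_hom.char_poly_hom[OF Mr, symmetric])
  also have "Polynomial.order (complex_of_real 1) (char_poly ?Mc) = kernel_dim ?Nc"
    using jnf_order_kernel[OF Mc ker2] by simp
  also have "\<dots> = n" by (rule kernel_dim_cons[OF refl m1 Nc kerC])
  finally show ?thesis using geom by simp
qed

end
end

theorem lemma12:
  fixes m n :: nat and C :: "nat \<Rightarrow> real mat"
  assumes "m \<ge> 2"
    and "\<And>i. i < m \<Longrightarrow> dim_col (C i) = n"
    and "\<And>i. i < m \<Longrightarrow> full_row_rank (C i)"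
    and "\<And>x :: nat \<Rightarrow> real vec. (\<forall>i<m. x i \<in> carrier_vec n) \<Longrightarrow>
           (\<forall>i<m. C i *\<^sub>v x i = C i *\<^sub>v x (pred_cyc m i)) \<Longrightarrow>
           (\<forall>i<m. \<forall>j<m. x i = x j)"
  shows "alg_mult (cyc_matrix m n C) 1 = n \<and> geom_mult (cyc_matrix m n C) 1 = n"
  by (rule final[OF assms(1) assms(2) assms(3) assms(4)])

end
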